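(* For $k\geq 0$ and $0\leq i\leq k+1$, $$f_{k+1,i}(x)=\sum_{j=0}^{i}(1+x)^{k+1-i}f_{k,j}(x)-f_{k,i}(x),$$ with initial conditions $f_{0,0}(x)=1$ and $f_{k,i}(x)=0$ for $k<i$.
   Context: An inversion sequence of length $n$ is $e=e_1\ldots e_n$ with $0\le e_i<i$. $\mathrm{asc}(e_1\ldots e_i)=|\{\ell\in[i-1]:e_\ell<e_{\ell+1}\}|$. An ascent sequence is an inversion sequence with $e_{i+1}\le \mathrm{asc}(e_1\ldots e_i)+1$ for all $i$; it is primitive if $e_i\ne e_{i+1}$ for all $i$. Let $\mathcal{PA}$ be the set of primitive ascent sequences of all lengths $\geq1$. For primitive $e$, partition $e$ into maximal strictly decreasing consecutive blocks (runs); an entry is a tail if it is the last (smallest) entry of its run. Define $\mathrm{wt}(e)=\prod_{i=1}^{\mathrm{len}(e)}\mathrm{wt}(e_i)$ with $\mathrm{wt}(e_i)=1$ if $e_i$ is a tail and $\mathrm{wt}(e_i)=x$ otherwise. A sequence avoids $\underline{12}0$ if there are no indices $2\le i<j$ with $e_j<e_{i-1}<e_i$. Let $\mathcal{PA}_{k,i}(\underline{12}0)$ be the set of $\underline{12}0$-avoiding $e\in\mathcal{PA}$ with $\mathrm{asc}(e)=k$ and last entry equal to $i$, and $f_{k,i}(x)=\sum_{e\in\mathcal{PA}_{k,i}(\underline{12}0)}\mathrm{wt}(e)$. *)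

theory Defs
  imports "HOL-Computational_Algebra.Polynomial"
begin

text \<open>Sequences are lists of naturals, indexed from 0: entry e_(p+1) of the paper is e ! p.\<close>

definition asc :: "nat list \<Rightarrow> nat" where
  "asc e = card {l. Suc l < length e \<and> e ! l < e ! Suc l}"

definition inversion_seq :: "nat list \<Rightarrow> bool" where
  "inversion_seq e \<longleftrightarrow> (\<forall>p < length e. e ! p \<le> p)"

definition ascent_seq :: "nat list \<Rightarrow> bool" where
  "ascent_seq e \<longleftrightarrow> inversion_seq e \<and>
     (\<forall>p. 1 \<le> p \<and> p < length e \<longrightarrow> e ! p \<le> asc (take p e) + 1)"

definition primitive :: "nat list \<Rightarrow> bool" where
  "primitive e \<longleftrightarrow> (\<forall>p. Suc p < length e \<longrightarrow> e ! p \<noteq> e ! Suc p)"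

definition PA :: "nat list set" where
  "PA = {e. length e \<ge> 1 \<and> ascent_seq e \<and> primitive e}"

text \<open>Position p is a tail iff it is the last entry of its maximal strictly
decreasing run, i.e. it is the last position or the next entry is not smaller.\<close>
definition is_tail :: "nat list \<Rightarrow> nat \<Rightarrow> bool" where
  "is_tail e p \<longleftrightarrow> Suc p = length e \<or> \<not> (e ! Suc p < e ! p)"

definition wt :: "nat list \<Rightarrow> int poly" where
  "wt e = (\<Prod>p<length e. if is_tail e p then 1 else [:0, 1:])"

text \<open>Avoidance of the vincular pattern 12_0 (paper indices 2 \<le> i < j, shifted by one).\<close>
definition avoids_12_0 :: "nat list \<Rightarrow> bool" where
  "avoids_12_0 e \<longleftrightarrow>
     \<not> (\<exists>i j. 1 \<le> i \<and> i < j \<and> j < length e \<and> e ! j < e ! (i - 1) \<and> e ! (i - 1) < e ! i)"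

definition PA_ki :: "nat \<Rightarrow> nat \<Rightarrow> nat list set" where
  "PA_ki k i = {e \<in> PA. avoids_12_0 e \<and> asc e = k \<and> last e = i}"

definition f :: "nat \<Rightarrow> nat \<Rightarrow> int poly" where
  "f k i = (\<Sum>e\<in>PA_ki k i. wt e)"

end

theory Submission imports Defs begin

definition pc :: "(nat \<Rightarrow> nat \<Rightarrow> bool) \<Rightarrow> nat list \<Rightarrow> nat" where
  "pc R e = card {l. Suc l < length e \<and> R (e!l) (e!Suc l)}"

fun pcr :: "(nat \<Rightarrow> nat \<Rightarrow> bool) \<Rightarrow> nat list \<Rightarrow> nat" where
  "pcr R [] = 0" | "pcr R [a] = 0" |
  "pcr R (a#b#xs) = (if R a b then 1 else 0) + pcr R (b#xs)"

lemma pc_pcr: "pc R e = pcr R e"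
proof (induction R e rule: pcr.induct)
  case (1 R) then show ?case by (simp add: pc_def)
next
  case (2 R a) then show ?case by (simp add: pc_def)
next
  case (3 R a b xs)
  define T where "T = {l. Suc l < length (b#xs) \<and> R ((b#xs)!l) ((b#xs)!Suc l)}"
  have fT: "finite T" unfolding T_def by (rule finite_subset[of _ "{..<length (b#xs)}"]) auto
  have eq: "{l. Suc l < length (a#b#xs) \<and> R ((a#b#xs)!l) ((a#b#xs)!Suc l)}
     = (if R a b then insert 0 (Suc ` T) else Suc ` T)"
  proof (rule set_eqI)
    fix x show "x \<in> {l. Suc l < length (a#b#xs) \<and> R ((a#b#xs)!l) ((a#b#xs)!Suc l)} \<longleftrightarrow>
      x \<in> (if R a b then insert 0 (Suc ` T) else Suc ` T)"
      by (cases x) (auto simp: T_def)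
  qed
  show ?case using 3 fT unfolding pc_def eq T_def[symmetric]
    by (simp add: card_image)
qed

lemma pcr_append: "pcr R (xs @ ys) = pcr R xs + pcr R ys +
   (if xs \<noteq> [] \<and> ys \<noteq> [] \<and> R (last xs) (hd ys) then 1 else 0)"
proof (induction R xs rule: pcr.induct)
  case (1 R) then show ?case by simp
next
  case (2 R a) then show ?case by (cases ys) simp_all
next
  case (3 R a b xs)
  have "pcr R ((a#b#xs)@ys) = (if R a b then 1 else 0) + pcr R ((b#xs)@ys)" by simp
  also have "\<dots> = (if R a b then 1 else 0) + (pcr R (b#xs) + pcr R ys +
   (if ys \<noteq> [] \<and> R (last (b#xs)) (hd ys) then 1 else 0))" using 3 by simp
  finally show ?case by simp
qed

lemma pc_append: "pc R (xs @ ys) = pc R xs + pc R ys +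
   (if xs \<noteq> [] \<and> ys \<noteq> [] \<and> R (last xs) (hd ys) then 1 else 0)"
  by (simp add: pc_pcr pcr_append)

lemma pc_le: "pc R e \<le> length e - 1"
proof -
  have "{l. Suc l < length e \<and> R (e!l) (e!Suc l)} \<subseteq> {..<length e - 1}" by auto
  then show ?thesis unfolding pc_def by (metis card_lessThan card_mono finite_lessThan)
qed

lemma pc_none: "(\<And>l. Suc l < length e \<Longrightarrow> \<not> R (e!l) (e!Suc l)) \<Longrightarrow> pc R e = 0"
proof -
  assume "\<And>l. Suc l < length e \<Longrightarrow> \<not> R (e!l) (e!Suc l)"
  then have "{l. Suc l < length e \<and> R (e!l) (e!Suc l)} = {}" by auto
  then show ?thesis unfolding pc_def by (metis card.empty)
qed

lemma pc_all: "(\<And>l. Suc l < length e \<Longrightarrow> R (e!l) (e!Suc l)) \<Longrightarrow> pc R e = length e - 1"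
proof -
  assume "\<And>l. Suc l < length e \<Longrightarrow> R (e!l) (e!Suc l)"
  then have "{l. Suc l < length e \<and> R (e!l) (e!Suc l)} = {..<length e - 1}" by auto
  then show ?thesis unfolding pc_def by simp
qed

lemma asc_pc: "asc e = pc (<) e"
  unfolding asc_def pc_def by simp

lemma wt_pc: "wt e = [:0,1:] ^ pc (\<lambda>a b. b < a) e"
proof -
  have "wt e = (\<Prod>p\<in>{..<length e} \<inter> - {p. is_tail e p}. [:0,1:])"
    unfolding wt_def by (simp add: prod.If_cases)
  also have "{..<length e} \<inter> - {p. is_tail e p} = {l. Suc l < length e \<and> e!Suc l < e!l}"
    unfolding is_tail_def by auto
  finally show ?thesis unfolding pc_def by simp
qed


lemma inversion_take: "inversion_seq e \<Longrightarrow> inversion_seq (take q e)"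
  unfolding inversion_seq_def by auto

lemma ascent_take: "ascent_seq e \<Longrightarrow> ascent_seq (take q e)"
  unfolding ascent_seq_def using inversion_take by (auto simp: min_def)

lemma primitive_take: "primitive e \<Longrightarrow> primitive (take q e)"
  unfolding primitive_def by auto

lemma avoids_take: "avoids_12_0 e \<Longrightarrow> avoids_12_0 (take q e)"
proof -
  assume a: "avoids_12_0 e"
  show ?thesis unfolding avoids_12_0_def
  proof
    assume "\<exists>i j. 1 \<le> i \<and> i < j \<and> j < length (take q e) \<and> take q e ! j < take q e ! (i - 1) \<and> take q e ! (i - 1) < take q e ! i"
    then obtain i j where h: "1 \<le> i" "i < j" "j < length (take q e)" "take q e ! j < take q e ! (i - 1)" "take q e ! (i - 1) < take q e ! i" by blast
    have "j < q" "j < length e" using h(3) by auto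
    then have "e ! j < e ! (i - 1) \<and> e ! (i - 1) < e ! i" using h by simp
    then show False using a h(1,2) \<open>j < length e\<close> unfolding avoids_12_0_def by blast
  qed
qed

lemma take_Suc_snoc: "Suc p < length e \<Longrightarrow> take (Suc (Suc p)) e = take (Suc p) e @ [e ! Suc p]"
  by (simp add: take_Suc_conv_app_nth)

lemma asc_take_mono: "p \<le> q \<Longrightarrow> asc (take p e) \<le> asc (take q e)"
proof -
  assume "p \<le> q"
  then have "take q e = take p e @ take (q - p) (drop p e)"
    by (metis le_add_diff_inverse take_add)
  then show ?thesis unfolding asc_pc by (simp add: pc_append)
qed

lemma last_take_Suc: "p < length e \<Longrightarrow> last (take (Suc p) e) = e ! p"
  by (simp add: take_Suc_conv_app_nth)

lemma asc_zero: "asc e = 0 \<Longrightarrow> Suc l < length e \<Longrightarrow> \<not> e ! l < e ! Suc l"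
proof -
  assume a: "asc e = 0" "Suc l < length e"
  have "finite {l. Suc l < length e \<and> e ! l < e ! Suc l}"
    by (rule finite_subset[of _ "{..<length e}"]) auto
  then show ?thesis using a unfolding asc_def by auto
qed

lemma entry_le_asc:
  assumes "ascent_seq e" "p < length e"
  shows "e ! p \<le> asc (take (Suc p) e)"
  using assms(2)
proof (induction p)
  case 0
  then show ?case using assms(1) unfolding ascent_seq_def inversion_seq_def by auto
next
  case (Suc p)
  have IH: "e ! p \<le> asc (take (Suc p) e)" using Suc by simp
  have a: "e ! Suc p \<le> asc (take (Suc p) e) + 1" using assms(1) Suc.prems unfolding ascent_seq_def by auto
  have eq: "asc (take (Suc (Suc p)) e) = asc (take (Suc p) e) + (if e ! p < e ! Suc p then 1 else 0)"
    unfolding asc_pc take_Suc_snoc[OF Suc.prems] pc_append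
    using Suc.prems by (auto simp: pc_pcr last_take_Suc)
  show ?case
  proof (cases "e ! p < e ! Suc p")
    case True then show ?thesis using a eq by simp
  next
    case False then show ?thesis using IH eq by simp
  qed
qed

lemma last_le_asc: "ascent_seq e \<Longrightarrow> e \<noteq> [] \<Longrightarrow> last e \<le> asc e"
  using entry_le_asc[of e "length e - 1"] by (simp add: last_conv_nth)

lemma PA_ki_empty: "k < i \<Longrightarrow> PA_ki k i = {}"
  unfolding PA_ki_def PA_def using last_le_asc by fastforce

lemma PA_ki_0: "PA_ki 0 i = (if i = 0 then {[0]} else {})"
proof -
  have *: "e = [0]" if "e \<in> PA" "asc e = 0" for e
  proof -
    have L: "length e \<ge> 1" and as: "ascent_seq e" and pr: "primitive e" using that unfolding PA_def by auto
    have e0: "e ! 0 = 0" using as L unfolding ascent_seq_def inversion_seq_def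
      by (metis le_zero_eq less_le_trans zero_less_one)
    have "length e = 1"
    proof (rule ccontr)
      assume "length e \<noteq> 1"
      then have "Suc 0 < length e" using L by simp
      then have "\<not> e ! 0 < e ! 1" using asc_zero[OF that(2)] by auto
      moreover have "e ! 0 \<noteq> e ! 1" using pr \<open>Suc 0 < length e\<close> unfolding primitive_def by auto
      ultimately show False using e0 by simp
    qed
    then show ?thesis using e0 by (cases e) auto
  qed
  have a1: "[0] \<in> PA" unfolding PA_def ascent_seq_def inversion_seq_def primitive_def by simp
  have a2: "avoids_12_0 [0]" unfolding avoids_12_0_def by simp
  have a3: "asc [0] = 0" unfolding asc_pc by (simp add: pc_pcr)
  have sub: "PA_ki 0 i \<subseteq> {[0]}" using * unfolding PA_ki_def by blast
  show ?thesis
  proof (cases "i = 0")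
    case True
    then have "[0] \<in> PA_ki 0 i" using a1 a2 a3 unfolding PA_ki_def by simp
    then have "PA_ki 0 i = {[0]}" using sub by blast
    then show ?thesis using True by simp
  next
    case False
    then have "[0] \<notin> PA_ki 0 i" unfolding PA_ki_def by simp
    then have "PA_ki 0 i = {}" using sub by blast
    then show ?thesis using False by simp
  qed
qed

lemma f00: "f 0 0 = 1"
proof -
  have "wt [0] = 1" unfolding wt_def is_tail_def by simp
  then show ?thesis unfolding f_def PA_ki_0 by simp
qed


lemma sorted_gt_nth: "sorted_wrt (>) (r::nat list) \<Longrightarrow> a < b \<Longrightarrow> b < length r \<Longrightarrow> r!b < r!a"
  by (simp add: sorted_wrt_iff_nth_less)

lemma sorted_gt_last: "sorted_wrt (>) (r::nat list) \<Longrightarrow> t < length r \<Longrightarrow> last r \<le> r!t"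
proof -
  assume s: "sorted_wrt (>) r" and t: "t < length r"
  then have "r \<noteq> []" by auto
  then have "last r = r!(length r - 1)" by (simp add: last_conv_nth)
  moreover have "r!(length r - 1) \<le> r!t"
  proof (cases "t = length r - 1")
    case True then show ?thesis by simp
  next
    case False then have "t < length r - 1" using t by simp
    then show ?thesis using sorted_gt_nth[OF s, of t "length r - 1"] t \<open>r \<noteq> []\<close> by simp
  qed
  ultimately show ?thesis by simp
qed

lemma sorted_gt_hd: "sorted_wrt (>) (r::nat list) \<Longrightarrow> t < length r \<Longrightarrow> r!t \<le> hd r"
proof -
  assume s: "sorted_wrt (>) r" and t: "t < length r"
  then have "r \<noteq> []" by auto
  then have "hd r = r!0" by (simp add: hd_conv_nth)
  moreover have "r!t \<le> r!0"
    using sorted_gt_nth[OF s, of 0 t] t by (cases "t = 0") auto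
  ultimately show ?thesis by simp
qed

lemma avoid_bot_le_last:
  assumes av: "avoids_12_0 e" and i0: "1 \<le> i0" "i0 < length e" and asc: "e!(i0-1) < e!i0"
  shows "e!(i0-1) \<le> last e"
proof -
  have "e \<noteq> []" using i0 by auto
  then have l: "last e = e!(length e - 1)" by (simp add: last_conv_nth)
  show ?thesis
  proof (cases "i0 = length e - 1")
    case True then show ?thesis using l asc by simp
  next
    case False
    then have "i0 < length e - 1" using i0 by simp
    have "\<not>(1 \<le> i0 \<and> i0 < length e - 1 \<and> length e - 1 < length e \<and> e!(length e-1) < e!(i0-1) \<and> e!(i0-1) < e!i0)"
      using av unfolding avoids_12_0_def by blast
    then have "\<not> (e!(length e - 1) < e!(i0-1))" using i0 asc \<open>i0 < length e - 1\<close> by auto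
    then show ?thesis using l by simp
  qed
qed

lemma glue:
  assumes e': "e' \<in> PA_ki k j" and ji: "j \<le> i" and rne: "r \<noteq> []" and sr: "sorted_wrt (>) r"
    and lr: "last r = i" and hr: "hd r \<le> Suc k" and jh: "j < hd r"
  shows "e' @ r \<in> PA_ki (Suc k) i \<and> wt (e'@r) = wt e' * [:0,1:]^(length r - 1)"
proof -
  have L: "length e' \<ge> 1" and as: "ascent_seq e'" and pr: "primitive e'" and av: "avoids_12_0 e'"
    and ae: "asc e' = k" and le: "last e' = j"
    using e' unfolding PA_ki_def PA_def by auto
  define m where "m = length e'"
  define E where "E = e' @ r"
  have lenE: "length E = m + length r" unfolding E_def m_def by simp
  have nthE: "\<And>p. E!p = (if p < m then e'!p else r!(p-m))" unfolding E_def m_def by (simp add: nth_append)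
  have e'ne: "e' \<noteq> []" using L by auto
  have lastm: "e'!(m-1) = j" using le e'ne unfolding m_def by (simp add: last_conv_nth)
  have r0: "r!0 = hd r" using rne by (simp add: hd_conv_nth)
  have rge: "\<And>t. t < length r \<Longrightarrow> i \<le> r!t" using sorted_gt_last[OF sr] lr by blast
  have rle: "\<And>t. t < length r \<Longrightarrow> r!t \<le> hd r" using sorted_gt_hd[OF sr] by blast
  have pc1: "pc (<) r = 0" by (rule pc_none) (use sorted_gt_nth[OF sr] in fastforce)
  have pc2: "pc (\<lambda>a b. b < a) r = length r - 1" by (rule pc_all) (use sorted_gt_nth[OF sr] in fastforce)
  have ascE: "asc E = Suc k" unfolding E_def asc_pc pc_append using pc1 ae le jh e'ne rne
    by (simp add: asc_pc)
  have km: "Suc k \<le> m" using pc_le[of "(<)" e'] ae L unfolding asc_pc m_def by simp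
  have takem: "take m E = e'" unfolding E_def m_def by simp
  have inv': "\<And>p. p < m \<Longrightarrow> e'!p \<le> p" using as unfolding ascent_seq_def inversion_seq_def m_def by auto
  have asc': "\<And>p. 1 \<le> p \<Longrightarrow> p < m \<Longrightarrow> e'!p \<le> asc (take p e') + 1"
    using as unfolding ascent_seq_def m_def by auto
  have invE: "inversion_seq E" unfolding inversion_seq_def
  proof (intro allI impI)
    fix p assume p: "p < length E"
    show "E!p \<le> p"
    proof (cases "p < m")
      case True then show ?thesis using inv' nthE by simp
    next
      case False
      then have "E!p = r!(p-m)" using nthE by simp
      also have "\<dots> \<le> hd r" using rle p lenE False by simp
      finally show ?thesis using hr km False by simp
    qed
  qed
  have ascseqE: "ascent_seq E" unfolding ascent_seq_def
  proof (intro conjI invE allI impI)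
    fix p assume p: "1 \<le> p \<and> p < length E"
    show "E!p \<le> asc (take p E) + 1"
    proof (cases "p < m")
      case True
      then have "take p E = take p e'" unfolding E_def m_def by simp
      then show ?thesis using True asc' p nthE by simp
    next
      case False
      show ?thesis
      proof (cases "p = m")
        case True
        then show ?thesis using nthE r0 hr takem ae by simp
      next
        case False2: False
        then have pm: "p > m" using False by simp
        have "E!p = r!(p-m)" using nthE False by simp
        also have "\<dots> < r!0" using sorted_gt_nth[OF sr, of 0 "p-m"] pm p lenE by simp
        finally have "E!p \<le> k" using r0 hr by simp
        moreover have "asc (take m E) \<le> asc (take p E)" using asc_take_mono pm by simp
        ultimately show ?thesis using takem ae by simp
      qed
    qed
  qed
  have primE: "primitive E" unfolding primitive_def
  proof (intro allI impI)
    fix p assume p: "Suc p < length E"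
    show "E!p \<noteq> E!Suc p"
    proof (cases "Suc p < m")
      case True then show ?thesis using pr nthE unfolding primitive_def m_def by simp
    next
      case False
      show ?thesis
      proof (cases "Suc p = m")
        case True
        then have "E!p = j" "E!Suc p = hd r" using nthE lastm r0 by auto
        then show ?thesis using jh by simp
      next
        case False2: False
        then have "E!p = r!(p-m)" "E!Suc p = r!(Suc p - m)" using nthE False by auto
        moreover have "Suc p - m = Suc (p - m)" "Suc (p - m) < length r" using False False2 p lenE by auto
        ultimately show ?thesis using sorted_gt_nth[OF sr, of "p-m" "Suc (p-m)"] p lenE by simp
      qed
    qed
  qed
  have avE: "avoids_12_0 E" unfolding avoids_12_0_def
  proof
    assume "\<exists>i0 j0. 1 \<le> i0 \<and> i0 < j0 \<and> j0 < length E \<and> E ! j0 < E ! (i0 - 1) \<and> E ! (i0 - 1) < E ! i0"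
    then obtain i0 j0 where h: "1 \<le> i0" "i0 < j0" "j0 < length E" "E ! j0 < E ! (i0 - 1)" "E ! (i0 - 1) < E ! i0"
      by blast
    show False
    proof (cases "j0 < m")
      case True
      then have "i0 - 1 < m" "i0 < m" using h by auto
      then have "e'!j0 < e'!(i0-1) \<and> e'!(i0-1) < e'!i0" using h nthE \<open>j0 < m\<close> by simp
      then show False using av h True unfolding avoids_12_0_def m_def by blast
    next
      case False
      then have Ej: "i \<le> E!j0" using nthE rge h(3) lenE by simp
      show False
      proof (cases "i0 < m")
        case True
 then have "i0 - 1 < m" by simp
        then have "e'!(i0-1) < e'!i0" using h nthE \<open>i0 < m\<close> by simp
        then have "e'!(i0-1) \<le> j" using avoid_bot_le_last[OF av h(1)] True le unfolding m_def by simp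
        then show False using h nthE True Ej ji \<open>i0 - 1 < m\<close> by simp
      next
        case False2: False
        show False
        proof (cases "i0 = m")
          case True
          moreover have "m - 1 < m" using L unfolding m_def by simp
          ultimately have "E!(i0-1) = j" using nthE lastm by simp
          then show False using h Ej ji by simp
        next
          case False3: False
          then have "E!(i0-1) = r!(i0-1-m)" "E!i0 = r!(i0-m)" using nthE False2 by auto
          moreover have "i0 - m = Suc (i0-1-m)" "i0 - m < length r" using False2 False3 h(2,3) lenE by auto
          ultimately show False using sorted_gt_nth[OF sr, of "i0-1-m" "i0-m"] h lenE by simp
        qed
      qed
    qed
  qed
  have lastE: "last E = i" unfolding E_def using rne lr by simp
  have "E \<in> PA_ki (Suc k) i"
    unfolding PA_ki_def PA_def using ascseqE primE avE ascE lastE lenE L unfolding m_def by simp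
  moreover have "wt E = wt e' * [:0,1:]^(length r - 1)"
    unfolding wt_pc E_def pc_append using pc2 e'ne rne le jh by (simp add: power_add)
  ultimately show ?thesis unfolding E_def by simp
qed


lemma split_seq:
  assumes E: "E \<in> PA_ki (Suc k) i"
  shows "\<exists>e' r. E = e' @ r \<and> e' \<in> PA_ki k (last e') \<and> last e' \<le> i \<and> r \<noteq> [] \<and>
     sorted_wrt (>) r \<and> last r = i \<and> hd r \<le> Suc k \<and> last e' < hd r"
proof -
  have L: "length E \<ge> 1" and as: "ascent_seq E" and pr: "primitive E" and av: "avoids_12_0 E"
    and aE: "asc E = Suc k" and lE: "last E = i"
    using E unfolding PA_ki_def PA_def by auto
  define A where "A = {l. Suc l < length E \<and> E!l < E!Suc l}"
  have fA: "finite A" unfolding A_def by (rule finite_subset[of _ "{..<length E}"]) auto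
  have "card A = Suc k" using aE unfolding asc_def A_def by simp
  then have Ane: "A \<noteq> {}" by auto
  define p where "p = Max A"
  have pA: "p \<in> A" unfolding p_def using fA Ane by (rule Max_in)
  have pmax: "\<And>l. l \<in> A \<Longrightarrow> l \<le> p" unfolding p_def using fA by simp
  have p1: "Suc p < length E" and p2: "E!p < E!Suc p" using pA unfolding A_def by auto
  define e' where "e' = take (Suc p) E"
  define r where "r = drop (Suc p) E"
  have Eeq: "E = e' @ r" unfolding e'_def r_def by simp
  have e'ne: "e' \<noteq> []" unfolding e'_def using p1 by (cases E) auto
  have rne: "r \<noteq> []" unfolding r_def using p1 by simp
  have le': "last e' = E!p" unfolding e'_def using p1 by (simp add: last_take_Suc)
  have hr: "hd r = E!Suc p" unfolding r_def using p1 by (simp add: hd_drop_conv_nth)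
  have lenr: "length r = length E - Suc p" unfolding r_def by simp
  have rnth: "\<And>q. q < length r \<Longrightarrow> r!q = E!(Suc p + q)" unfolding r_def using p1 by simp
  have sr: "sorted_wrt (>) r"
  proof -
    have "\<forall>q. Suc q < length r \<longrightarrow> r!Suc q < r!q"
    proof (intro allI impI)
      fix q assume q: "Suc q < length r"
      define l where "l = Suc p + q"
      have l1: "Suc l < length E" using q lenr unfolding l_def by simp
      have "l \<notin> A" using pmax unfolding l_def by fastforce
      then have "\<not> E!l < E!Suc l" using l1 unfolding A_def by simp
      moreover have "E!l \<noteq> E!Suc l" using pr l1 unfolding primitive_def by simp
      ultimately have "E!Suc l < E!l" by simp
      then show "r!Suc q < r!q" using rnth q unfolding l_def by simp
    qed
    moreover have "transp ((>) :: nat \<Rightarrow> nat \<Rightarrow> bool)" by (auto simp: transp_def)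
    ultimately show ?thesis by (simp add: sorted_wrt_iff_nth_Suc_transp)
  qed
  have pc1: "pc (<) r = 0" by (rule pc_none) (use sorted_gt_nth[OF sr] in fastforce)
  have ae': "asc e' = k" using aE unfolding Eeq asc_pc pc_append using pc1 e'ne rne le' hr p2 by simp
  have e'PA: "e' \<in> PA_ki k (last e')"
    unfolding PA_ki_def PA_def e'_def
    using ascent_take[OF as] primitive_take[OF pr] avoids_take[OF av] ae' p1 unfolding e'_def by auto
  have Ene: "E \<noteq> []" using L by (cases E) auto
  have lastE: "last E = E!(length E - 1)" using Ene by (simp add: last_conv_nth)
  have le'i: "last e' \<le> i"
  proof (cases "Suc p = length E - 1")
    case True then show ?thesis using lE lastE le' p2 by simp
  next
    case False
    then have "Suc p < length E - 1" using p1 by simp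
    have "\<not>(1 \<le> Suc p \<and> Suc p < length E - 1 \<and> length E - 1 < length E \<and> E!(length E-1) < E!(Suc p-1) \<and> E!(Suc p-1) < E!Suc p)"
      using av unfolding avoids_12_0_def by blast
    then show ?thesis using \<open>Suc p < length E - 1\<close> p2 lastE lE le' by auto
  qed
  have lr: "last r = i" using lE rne unfolding Eeq by simp
  have "E!Suc p \<le> asc (take (Suc p) E) + 1" using as p1 unfolding ascent_seq_def by auto
  then have hrk: "hd r \<le> Suc k" using hr ae' unfolding e'_def by simp
  have lh: "last e' < hd r" using le' hr p2 by simp
  show ?thesis
    apply (rule exI[where x=e'])
    apply (rule exI[where x=r])
    using Eeq e'PA le'i rne sr lr hrk lh by blast
qed

lemma la_unique:
  assumes e'ne: "e' \<noteq> []" and rne: "r \<noteq> []" and sr: "sorted_wrt (>) (r::nat list)" and lh: "last e' < hd r"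
  shows "Max {l. Suc l < length (e'@r) \<and> (e'@r)!l < (e'@r)!Suc l} = length e' - 1"
proof (rule Max_eqI)
  show "finite {l. Suc l < length (e'@r) \<and> (e'@r)!l < (e'@r)!Suc l}"
    by (rule finite_subset[of _ "{..<length (e'@r)}"]) auto
next
  define m where "m = length e'"
  have m1: "m \<ge> 1" using e'ne unfolding m_def by (cases e') auto
  have nthE: "\<And>p. (e'@r)!p = (if p < m then e'!p else r!(p-m))" unfolding m_def by (simp add: nth_append)
  fix y assume "y \<in> {l. Suc l < length (e'@r) \<and> (e'@r)!l < (e'@r)!Suc l}"
  then have y: "Suc y < m + length r" "(e'@r)!y < (e'@r)!Suc y" unfolding m_def by auto
  show "y \<le> length e' - 1"
  proof (rule ccontr)
    assume "\<not> y \<le> length e' - 1"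
    then have ym: "y \<ge> m" unfolding m_def by simp
    then have "(e'@r)!y = r!(y-m)" "(e'@r)!Suc y = r!Suc (y-m)" "Suc (y - m) < length r"
      using nthE y(1) by (auto simp: Suc_diff_le)
    then show False using y(2) sorted_gt_nth[OF sr, of "y-m" "Suc (y-m)"] by simp
  qed
next
  have "(e'@r)!(length e' - 1) = last e'" using e'ne by (simp add: nth_append last_conv_nth)
  moreover have "(e'@r)!Suc (length e' - 1) = hd r" using e'ne rne by (simp add: nth_append hd_conv_nth)
  moreover have "Suc (length e' - 1) < length (e'@r)" using e'ne rne by simp
  ultimately show "length e' - 1 \<in> {l. Suc l < length (e'@r) \<and> (e'@r)!l < (e'@r)!Suc l}"
    using lh by simp
qed

lemma decomp_unique:
  assumes "e1 @ r1 = e2 @ r2" "e1 \<noteq> []" "r1 \<noteq> []" "sorted_wrt (>) (r1::nat list)" "last e1 < hd r1"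
    "e2 \<noteq> []" "r2 \<noteq> []" "sorted_wrt (>) r2" "last e2 < hd r2"
  shows "e1 = e2 \<and> r1 = r2"
proof -
  have a: "Max {l. Suc l < length (e1@r1) \<and> (e1@r1)!l < (e1@r1)!Suc l} = length e1 - 1"
    using la_unique[of e1 r1] assms by blast
  have b: "Max {l. Suc l < length (e2@r2) \<and> (e2@r2)!l < (e2@r2)!Suc l} = length e2 - 1"
    using la_unique[of e2 r2] assms by blast
  have "length e1 - 1 = length e2 - 1" using a b unfolding assms(1) by simp
  then have "length e1 = length e2" using assms(2,6) by (cases e1; cases e2) auto
  then show ?thesis using assms(1) by (simp add: append_eq_append_conv)
qed

definition run :: "nat \<Rightarrow> nat set \<Rightarrow> nat list" where
  "run i S = rev (sorted_list_of_set (insert i S))"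

lemma run_props:
  assumes "finite S" "\<forall>x\<in>S. i < x"
  shows "run i S \<noteq> [] \<and> sorted_wrt (>) (run i S) \<and> set (run i S) = insert i S \<and>
         last (run i S) = i \<and> length (run i S) = Suc (card S)"
proof -
  have f: "finite (insert i S)" using assms by simp
  have st: "sorted_wrt (>) (run i S)" unfolding run_def sorted_wrt_rev
    using strict_sorted_list_of_set[of "insert i S"] by simp
  have se: "set (run i S) = insert i S" unfolding run_def set_rev by (rule set_sorted_list_of_set[OF f])
  have ne: "run i S \<noteq> []" using se by auto
  have "i \<notin> S" using assms by auto
  then have len: "length (run i S) = Suc (card S)" unfolding run_def using assms by simp
  have "last (run i S) \<in> set (run i S)" using ne by simp
  then have l1: "last (run i S) \<ge> i" using se assms by auto
  have "i \<in> set (run i S)" using se by simp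
  then obtain t where "t < length (run i S)" "run i S ! t = i" by (auto simp: in_set_conv_nth)
  then have "last (run i S) \<le> i" using sorted_gt_last[OF st, of t] by simp
  then show ?thesis using st se ne len l1 by simp
qed

lemma sorted_gt_hd_set: "sorted_wrt (>) (r::nat list) \<Longrightarrow> x \<in> set r \<Longrightarrow> x \<le> hd r"
proof -
  assume s: "sorted_wrt (>) r" and "x \<in> set r"
  then obtain t where "t < length r" "r!t = x" by (auto simp: in_set_conv_nth)
  then show ?thesis using sorted_gt_hd[OF s, of t] by simp
qed

lemma sorted_gt_last_set: "sorted_wrt (>) (r::nat list) \<Longrightarrow> x \<in> set r \<Longrightarrow> last r \<le> x"
proof -
  assume s: "sorted_wrt (>) r" and "x \<in> set r"
  then obtain t where "t < length r" "r!t = x" by (auto simp: in_set_conv_nth)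
  then show ?thesis using sorted_gt_last[OF s, of t] by simp
qed

lemma run_inv:
  assumes "sorted_wrt (>) (r::nat list)" "r \<noteq> []" "last r = i"
  shows "run i (set r - {i}) = r"
proof -
  have "i \<in> set r" using assms by auto
  then have "insert i (set r - {i}) = set (rev r)" by auto
  moreover have "sorted_wrt (<) (rev r)" using assms(1) by (simp add: sorted_wrt_rev)
  then have "sorted (rev r)" "distinct (rev r)" by (auto simp: strict_sorted_iff)
  moreover have "sorted_list_of_set (set (rev r)) = sort (remdups (rev r))"
    by (rule sorted_list_of_set_sort_remdups)
  ultimately show ?thesis unfolding run_def
    by (simp only: distinct_remdups_id sorted_sort_id rev_rev_ident)
qed


definition G :: "nat \<Rightarrow> nat list \<times> nat set \<Rightarrow> nat list" where
  "G i x = fst x @ run i (snd x)"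

definition Dom :: "nat \<Rightarrow> nat \<Rightarrow> (nat list \<times> nat set) set" where
  "Dom k i = Sigma (\<Union>j\<in>{..i}. PA_ki k j) (\<lambda>e'. {S. S \<subseteq> {Suc i..Suc k} \<and> (S \<noteq> {} \<or> last e' \<noteq> i)})"

lemma PA_ki_last: "e \<in> PA_ki k j \<Longrightarrow> last e = j"
  unfolding PA_ki_def by simp

lemma dom_facts:
  assumes x: "(e', S) \<in> Dom k i" and ik: "i \<le> Suc k"
  shows "e' \<in> PA_ki k (last e') \<and> last e' \<le> i \<and> e' \<noteq> [] \<and> finite S \<and> i \<notin> S \<and>
    run i S \<noteq> [] \<and> sorted_wrt (>) (run i S) \<and> set (run i S) = insert i S \<and>
    last (run i S) = i \<and> length (run i S) = Suc (card S) \<and> hd (run i S) \<le> Suc k \<and> last e' < hd (run i S)"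
proof -
  obtain j where j: "j \<le> i" "e' \<in> PA_ki k j" and S: "S \<subseteq> {Suc i..Suc k}" and c: "S \<noteq> {} \<or> last e' \<noteq> i"
    using x unfolding Dom_def by auto
  have lj: "last e' = j" using j PA_ki_last by simp
  have ne: "e' \<noteq> []" using j(2) unfolding PA_ki_def PA_def by auto
  have fS: "finite S" using S finite_subset by blast
  have gt: "\<forall>x\<in>S. i < x" using S by auto
  note rp = run_props[OF fS gt]
  have hin: "hd (run i S) \<in> insert i S" using rp by (metis list.set_sel(1))
  then have hk: "hd (run i S) \<le> Suc k" using S ik by auto
  have lh: "last e' < hd (run i S)"
  proof (cases "S = {}")
    case True
    then have "hd (run i S) = i" using hin by simp
    then show ?thesis using c True lj j(1) by simp
  next
    case False
    then obtain y where y: "y \<in> S" by auto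
    then have "y \<le> hd (run i S)" using sorted_gt_hd_set[of "run i S" y] rp by simp
    then show ?thesis using y gt lj j(1) by fastforce
  qed
  show ?thesis using rp hk lh lj j ne fS gt by auto
qed

lemma G_in:
  assumes x: "(e', S) \<in> Dom k i" and ik: "i \<le> Suc k"
  shows "G i (e', S) \<in> PA_ki (Suc k) i \<and> wt (G i (e', S)) = wt e' * [:0,1:] ^ card S"
  using glue[of e' k "last e'" i "run i S"] dom_facts[OF x ik] unfolding G_def by simp

lemma G_bij:
  assumes ik: "i \<le> Suc k"
  shows "bij_betw (G i) (Dom k i) (PA_ki (Suc k) i)"
  unfolding bij_betw_def
proof (intro conjI)
  show "inj_on (G i) (Dom k i)"
  proof (rule inj_onI)
    fix x y assume x: "x \<in> Dom k i" and y: "y \<in> Dom k i" and eq: "G i x = G i y"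
    obtain e1 S1 where x1: "x = (e1, S1)" by (cases x)
    obtain e2 S2 where y1: "y = (e2, S2)" by (cases y)
    note f1 = dom_facts[OF x[unfolded x1] ik]
    note f2 = dom_facts[OF y[unfolded y1] ik]
    have "e1 @ run i S1 = e2 @ run i S2" using eq unfolding x1 y1 G_def by simp
    then have "e1 = e2 \<and> run i S1 = run i S2" using decomp_unique f1 f2 by blast
    moreover have "S1 = insert i S1 - {i}" "S2 = insert i S2 - {i}" using f1 f2 by auto
    ultimately have "e1 = e2 \<and> S1 = S2" using f1 f2 by metis
    then show "x = y" using x1 y1 by simp
  qed
next
  show "G i ` Dom k i = PA_ki (Suc k) i"
  proof
    show "G i ` Dom k i \<subseteq> PA_ki (Suc k) i" using G_in ik by auto
  next
    show "PA_ki (Suc k) i \<subseteq> G i ` Dom k i"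
    proof
      fix E assume E: "E \<in> PA_ki (Suc k) i"
      obtain e' r where h: "E = e' @ r" "e' \<in> PA_ki k (last e')" "last e' \<le> i" "r \<noteq> []"
        "sorted_wrt (>) r" "last r = i" "hd r \<le> Suc k" "last e' < hd r"
        using split_seq[OF E] by blast
      define S where "S = set r - {i}"
      have rS: "run i S = r" unfolding S_def using run_inv h by simp
      have Ssub: "S \<subseteq> {Suc i..Suc k}"
      proof
        fix y assume y: "y \<in> S"
        then have "y \<in> set r" "y \<noteq> i" unfolding S_def by auto
        then have "i \<le> y" "y \<le> hd r" using sorted_gt_last_set[OF h(5)] sorted_gt_hd_set[OF h(5)] h(6) by auto
        then show "y \<in> {Suc i..Suc k}" using \<open>y \<noteq> i\<close> h(7) by auto
      qed
      have c: "S \<noteq> {} \<or> last e' \<noteq> i"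
      proof (cases "S = {}")
        case True
        have "hd r \<in> set r" using h(4) by simp
        then have "hd r = i" using True unfolding S_def by auto
        then show ?thesis using h(8) by simp
      qed simp
      have "(e', S) \<in> Dom k i" unfolding Dom_def using h(2,3) Ssub c by auto
      moreover have "G i (e', S) = E" unfolding G_def using rS h(1) by simp
      ultimately show "E \<in> G i ` Dom k i" by force
    qed
  qed
qed

lemma finite_PA_ki: "finite (PA_ki k i)"
proof (induction k arbitrary: i)
  case 0
  then show ?case by (simp add: PA_ki_0)
next
  case (Suc k)
  show ?case
  proof (cases "i \<le> Suc k")
    case True
    have "Dom k i \<subseteq> Sigma (\<Union>j\<in>{..i}. PA_ki k j) (\<lambda>_. Pow {Suc i..Suc k})" unfolding Dom_def by auto
    moreover have "finite (Sigma (\<Union>j\<in>{..i}. PA_ki k j) (\<lambda>_. Pow {Suc i..Suc k}))"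
      using Suc by (intro finite_SigmaI) auto
    ultimately have "finite (Dom k i)" by (rule finite_subset)
    then show ?thesis using G_bij[OF True] by (metis bij_betw_finite)
  next
    case False
    then show ?thesis by (simp add: PA_ki_empty)
  qed
qed

lemma sum_pow:
  assumes "finite P"
  shows "(\<Sum>S\<in>Pow P. [:0,1::int:] ^ card S) = [:1,1:] ^ card P"
proof -
  have "(\<Prod>x\<in>P. [:0,1::int:] + 1) = (\<Sum>S\<in>Pow P. (\<Prod>x\<in>S. [:0,1::int:]) * (\<Prod>x\<in>P-S. 1))"
    by (rule prod_add[OF assms])
  moreover have "[:0,1::int:] + 1 = [:1,1:]" by (simp add: one_pCons)
  ultimately show ?thesis by simp
qed

lemma sum_B:
  assumes "finite P"
  shows "(\<Sum>S\<in>{S. S \<subseteq> P \<and> (S \<noteq> {} \<or> c)}. [:0,1::int:] ^ card S) = [:1,1:] ^ card P - (if c then 0 else 1)"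
proof (cases c)
  case True
  then have "{S. S \<subseteq> P \<and> (S \<noteq> {} \<or> c)} = Pow P" by auto
  then show ?thesis using sum_pow[OF assms] True by simp
next
  case False
  then have "{S. S \<subseteq> P \<and> (S \<noteq> {} \<or> c)} = Pow P - {{}}" by auto
  moreover have "finite (Pow P)" using assms by simp
  ultimately show ?thesis using sum_pow[OF assms] False by (simp add: sum_diff1)
qed

lemma recurrence:
  assumes ik: "i \<le> Suc k"
  shows "f (Suc k) i = (\<Sum>j = 0..i. [:1, 1:] ^ (Suc k - i) * f k j) - f k i"
proof -
  define U where "U = (\<Union>j\<in>{..i}. PA_ki k j)"
  define B where "B = (\<lambda>e'. {S. S \<subseteq> {Suc i..Suc k} \<and> (S \<noteq> {} \<or> last e' \<noteq> i)})"
  define Y where "Y = ([:1,1:] :: int poly)"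
  define n where "n = Suc k - i"
  have DomUB: "Dom k i = Sigma U B" unfolding Dom_def U_def B_def by simp
  have fU: "finite U" unfolding U_def using finite_PA_ki by auto
  have fB: "\<And>e'. finite (B e')" unfolding B_def by (rule finite_subset[of _ "Pow {Suc i..Suc k}"]) auto
  have cardP: "card {Suc i..Suc k} = n" unfolding n_def by simp
  have "f (Suc k) i = (\<Sum>x\<in>Dom k i. wt (G i x))"
    unfolding f_def by (rule sum.reindex_bij_betw[OF G_bij[OF ik], symmetric])
  also have "\<dots> = (\<Sum>x\<in>Dom k i. (\<lambda>(e', S). wt e' * [:0,1:] ^ card S) x)"
    by (rule sum.cong) (use G_in[OF _ ik] in auto)
  also have "\<dots> = (\<Sum>e'\<in>U. \<Sum>S\<in>B e'. wt e' * [:0,1:] ^ card S)"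
    unfolding DomUB by (rule sum.Sigma[symmetric]) (use fU fB in auto)
  also have "\<dots> = (\<Sum>e'\<in>U. wt e' * (Y ^ n - (if last e' \<noteq> i then 0 else 1)))"
  proof (rule sum.cong)
    fix e' assume "e' \<in> U"
    have "(\<Sum>S\<in>B e'. wt e' * [:0,1:] ^ card S) = wt e' * (\<Sum>S\<in>B e'. [:0,1:] ^ card S)"
      by (simp add: sum_distrib_left)
    also have "\<dots> = wt e' * (Y ^ n - (if last e' \<noteq> i then 0 else 1))"
      unfolding B_def using sum_B[of "{Suc i..Suc k}" "last e' \<noteq> i"] cardP Y_def by simp
    finally show "(\<Sum>S\<in>B e'. wt e' * [:0,1:] ^ card S) = wt e' * (Y ^ n - (if last e' \<noteq> i then 0 else 1))" .
  qed simp
  also have "\<dots> = (\<Sum>j\<in>{..i}. \<Sum>e'\<in>PA_ki k j. wt e' * (Y ^ n - (if last e' \<noteq> i then 0 else 1)))"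
    unfolding U_def
  proof (rule sum.UNION_disjoint)
    show "finite {..i}" by simp
    show "\<forall>j\<in>{..i}. finite (PA_ki k j)" using finite_PA_ki by simp
    show "\<forall>j1\<in>{..i}. \<forall>j2\<in>{..i}. j1 \<noteq> j2 \<longrightarrow> PA_ki k j1 \<inter> PA_ki k j2 = {}"
      using PA_ki_last by blast
  qed
  also have "\<dots> = (\<Sum>j\<in>{..i}. Y ^ n * f k j - (if j = i then f k j else 0))"
  proof (rule sum.cong)
    fix j assume "j \<in> {..i}"
    have "(\<Sum>e'\<in>PA_ki k j. wt e' * (Y ^ n - (if last e' \<noteq> i then 0 else 1)))
        = (\<Sum>e'\<in>PA_ki k j. wt e' * (Y ^ n - (if j \<noteq> i then 0 else 1)))"
      by (rule sum.cong) (auto simp: PA_ki_last)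
    also have "\<dots> = f k j * (Y ^ n - (if j \<noteq> i then 0 else 1))"
      unfolding f_def by (simp add: sum_distrib_right)
    also have "\<dots> = Y ^ n * f k j - (if j = i then f k j else 0)"
      by (simp add: algebra_simps)
    finally show "(\<Sum>e'\<in>PA_ki k j. wt e' * (Y ^ n - (if last e' \<noteq> i then 0 else 1)))
        = Y ^ n * f k j - (if j = i then f k j else 0)" .
  qed simp
  also have "\<dots> = (\<Sum>j\<in>{..i}. Y ^ n * f k j) - f k i"
    by (simp add: sum_subtractf)
  finally show ?thesis unfolding Y_def n_def by (simp add: atLeast0AtMost)
qed

theorem lemma2p2:
  shows "(\<forall>k i. i \<le> k + 1 \<longrightarrow>
            f (k + 1) i = (\<Sum>j = 0..i. [:1, 1:] ^ (k + 1 - i) * f k j) - f k i)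
         \<and> f 0 0 = 1
         \<and> (\<forall>k i. k < i \<longrightarrow> f k i = 0)"
proof (intro conjI allI impI)
  fix k i :: nat assume "i \<le> k + 1"
  then show "f (k + 1) i = (\<Sum>j = 0..i. [:1, 1:] ^ (k + 1 - i) * f k j) - f k i"
    using recurrence[of i k] by simp
next
  show "f 0 0 = 1" by (rule f00)
next
  fix k i :: nat assume "k < i"
  then show "f k i = 0" unfolding f_def by (simp add: PA_ki_empty)
qed

end
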